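(* A perfect Euler cuboid exists if and only if there exist integers $a,b,c,u$ with $c>0$, $0<u/c<1$ and $(a/c,\,b/c)\in D_{ab}$ satisfying the homogeneous Diophantine equation of degree $12$ $$\begin{aligned}&u^4a^4b^4+6a^4u^2b^4c^2-2u^4a^4b^2c^2-2u^4a^2b^4c^2+4u^2b^4a^2c^4+4a^4u^2b^2c^4-12u^4a^2b^2c^4\\&+u^4a^4c^4+u^4b^4c^4+a^4b^4c^4+6a^4u^2c^6+6u^2b^4c^6-8a^2b^2u^2c^6-2u^4a^2c^6-2u^4b^2c^6\\&-2a^4b^2c^6-2b^4a^2c^6+u^4c^8+b^4c^8+a^4c^8+4a^2u^2c^8+4b^2u^2c^8-12b^2a^2c^8\\&+6u^2c^{10}-2a^2c^{10}-2b^2c^{10}+c^{12}=0.\end{aligned}$$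
   Context: An Euler cuboid is a rectangular parallelepiped whose three edge lengths and three face diagonal lengths are all positive integers; a perfect Euler cuboid is an Euler cuboid whose space diagonal also has integer length, i.e. a $7$-tuple of positive integers $(a,b,c,\alpha,\beta,\gamma,d)$ with $a^2+b^2=\gamma^2$, $b^2+c^2=\alpha^2$, $c^2+a^2=\beta^2$, $a^2+b^2+c^2=d^2$ (these letters are unrelated to the integer unknowns $a,b,c,u$ of the claim). Let $D_{uz}=\{(u,z)\in\mathbb{R}^2: 0<u<1,\ 0<z<1\}$. Define $f\colon D_{uz}\to\mathbb{R}^2$ by $f(u,z)=(a(u,z),b(u,z))$, where $a(u,z)$ and $b(u,z)$ are the positive real numbers determined by $$a^2=\frac{u^2+z^2}{u^2z^2+1},\qquad b^2=\frac{(1+u^2)(1+z^2)-2z(1-u^2)}{(1+u^2)(1+z^2)+2z(1-u^2)}$$ (both right-hand sides are positive on $D_{uz}$), and let $D_{ab}=f(D_{uz})$. *)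

theory Defs
  imports Complex_Main
begin

definition perfect_euler_cuboid :: "nat \<Rightarrow> nat \<Rightarrow> nat \<Rightarrow> nat \<Rightarrow> nat \<Rightarrow> nat \<Rightarrow> nat \<Rightarrow> bool" where
  "perfect_euler_cuboid a b c \<alpha> \<beta> \<gamma> d \<longleftrightarrow>
     a > 0 \<and> b > 0 \<and> c > 0 \<and> \<alpha> > 0 \<and> \<beta> > 0 \<and> \<gamma> > 0 \<and> d > 0 \<and>
     a^2 + b^2 = \<gamma>^2 \<and> b^2 + c^2 = \<alpha>^2 \<and> c^2 + a^2 = \<beta>^2 \<and> a^2 + b^2 + c^2 = d^2"

definition D_uz :: "(real \<times> real) set" where
  "D_uz = {(u, z). 0 < u \<and> u < 1 \<and> 0 < z \<and> z < 1}"

definition f_a :: "real \<Rightarrow> real \<Rightarrow> real" where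
  "f_a u z = sqrt ((u^2 + z^2) / (u^2 * z^2 + 1))"

definition f_b :: "real \<Rightarrow> real \<Rightarrow> real" where
  "f_b u z = sqrt (((1 + u^2) * (1 + z^2) - 2 * z * (1 - u^2)) /
                   ((1 + u^2) * (1 + z^2) + 2 * z * (1 - u^2)))"

definition f_uz :: "real \<times> real \<Rightarrow> real \<times> real" where
  "f_uz p = (f_a (fst p) (snd p), f_b (fst p) (snd p))"

definition D_ab :: "(real \<times> real) set" where
  "D_ab = f_uz ` D_uz"

end

theory Submission imports Defs begin

lemma L0:
  fixes a b c u :: int
  shows "u^4*a^4*b^4 + 6*a^4*u^2*b^4*c^2 - 2*u^4*a^4*b^2*c^2 - 2*u^4*a^2*b^4*c^2
       + 4*u^2*b^4*a^2*c^4 + 4*a^4*u^2*b^2*c^4 - 12*u^4*a^2*b^2*c^4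
       + u^4*a^4*c^4 + u^4*b^4*c^4 + a^4*b^4*c^4 + 6*a^4*u^2*c^6 + 6*u^2*b^4*c^6
       - 8*a^2*b^2*u^2*c^6 - 2*u^4*a^2*c^6 - 2*u^4*b^2*c^6
       - 2*a^4*b^2*c^6 - 2*b^4*a^2*c^6 + u^4*c^8 + b^4*c^8 + a^4*c^8
       + 4*a^2*u^2*c^8 + 4*b^2*u^2*c^8 - 12*b^2*a^2*c^8
       + 6*u^2*c^10 - 2*a^2*c^10 - 2*b^2*c^10 + c^12
     = ((c^2-a^2)*(c^2+b^2)*(c^2+u^2))^2 + ((c^2-b^2)*(c^2+a^2)*(c^2+u^2))^2
       - ((c^2-u^2)*(c^2+a^2)*(c^2+b^2))^2"
  by algebra

lemma Dab_props:
  assumes "(A, B) \<in> D_ab"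
  shows "0 < A \<and> A^2 < 1 \<and> 0 < B \<and> B^2 < 1"
proof -
  obtain u z where uz: "0 < u" "u < 1" "0 < z" "z < 1" and AB: "A = f_a u z" "B = f_b u z"
    using assms unfolding D_ab_def D_uz_def f_uz_def by auto
  have u2: "u^2 < 1" "z^2 < 1" using uz by (simp_all add: power_less_one_iff abs_less_iff power2_less_1_iff)
  have e1: "0 < (u^2 + z^2) / (u^2 * z^2 + 1)" using uz by (simp add: add_pos_nonneg)
  have e2: "(u^2 + z^2) / (u^2 * z^2 + 1) < 1"
  proof -
    have "u^2 + z^2 < u^2 * z^2 + 1"
    proof -
      have "0 < (1 - u^2) * (1 - z^2)" using u2 by simp
      thus ?thesis by (simp add: algebra_simps)
    qed
    moreover have "0 < u^2 * z^2 + 1" by (simp add: add_nonneg_pos)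
    ultimately show ?thesis by simp
  qed
  define N where "N = (1 + u^2) * (1 + z^2)"
  define M where "M = 2 * z * (1 - u^2)"
  have N: "N > 1" unfolding N_def using uz by (smt (verit) mult_less_cancel_left1 one_less_power zero_less_power) 
  have M1: "0 < M" unfolding M_def using uz u2 by simp
  have "N - M = (1 - z)^2 + u^2 * (1 + z)^2" unfolding M_def N_def by (simp add: algebra_simps power2_eq_square)
  moreover have "0 < (1 - z)^2" using uz by simp
  ultimately have M2: "M < N" by (smt (verit) zero_le_mult_iff zero_le_power2)
  note M = M1 M2
  have f1: "0 < (N - M) / (N + M)" using N M by simp
  have f2: "(N - M) / (N + M) < 1" using N M by simp
  have "A = sqrt ((u^2 + z^2) / (u^2 * z^2 + 1))" using AB f_a_def by simp
  moreover have "B = sqrt ((N - M) / (N + M))" using AB f_b_def N_def M_def by simp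
  ultimately show ?thesis using e1 e2 f1 f2 by simp
qed
lemma nat_pyth2:
  fixes x y z :: int
  assumes "0 \<le> x" "0 \<le> y" "0 \<le> z" "x^2 + y^2 = z^2"
  shows "(nat x)^2 + (nat y)^2 = (nat z)^2"
proof -
  have "int ((nat x)^2 + (nat y)^2) = int ((nat z)^2)" using assms by simp
  thus ?thesis by (simp only: of_nat_eq_iff)
qed

lemma nat_pyth3:
  fixes x y w z :: int
  assumes "0 \<le> x" "0 \<le> y" "0 \<le> w" "0 \<le> z" "x^2 + y^2 + w^2 = z^2"
  shows "(nat x)^2 + (nat y)^2 + (nat w)^2 = (nat z)^2"
proof -
  have "int ((nat x)^2 + (nat y)^2 + (nat w)^2) = int ((nat z)^2)" using assms by simp
  thus ?thesis by (simp only: of_nat_eq_iff)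
qed

lemma bwd:
  fixes a b c u :: int
  assumes c: "c > 0" and a: "0 < a" "a^2 < c^2" and b: "0 < b" "b^2 < c^2" and u: "0 < u" "u < c"
    and eq: "((c^2-a^2)*(c^2+b^2)*(c^2+u^2))^2 + ((c^2-b^2)*(c^2+a^2)*(c^2+u^2))^2
       - ((c^2-u^2)*(c^2+a^2)*(c^2+b^2))^2 = 0"
  shows "\<exists>a b c \<alpha> \<beta> \<gamma> d. perfect_euler_cuboid a b c \<alpha> \<beta> \<gamma> d"
proof -
  define p where "p = (c^2-a^2)*(c^2+b^2)*(c^2+u^2)"
  define q where "q = (c^2-b^2)*(c^2+a^2)*(c^2+u^2)"
  define g where "g = (c^2-u^2)*(c^2+a^2)*(c^2+b^2)"
  define d where "d = (c^2+a^2)*(c^2+b^2)*(c^2+u^2)"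
  define r where "r = 2*u*c*(c^2+a^2)*(c^2+b^2)"
  define al where "al = 2*a*c*(c^2+b^2)*(c^2+u^2)"
  define be where "be = 2*b*c*(c^2+a^2)*(c^2+u^2)"
  have u2: "u^2 < c^2" using u by (simp add: power_strict_mono)
  have pos: "p > 0" "q > 0" "g > 0" "d > 0" "r > 0" "al > 0" "be > 0"
    unfolding p_def q_def g_def d_def r_def al_def be_def using a b c u u2
    by (simp_all add: add_pos_nonneg)
  have main: "p^2 + q^2 = g^2" using eq unfolding p_def q_def g_def by simp
  have i1: "g^2 + r^2 = d^2" unfolding g_def r_def d_def by algebra
  have i2: "p^2 + al^2 = d^2" unfolding p_def al_def d_def by algebra
  have i3: "q^2 + be^2 = d^2" unfolding q_def be_def d_def by algebra
  have r1: "q^2 + r^2 = al^2" using main i1 i2 by simp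
  have r2: "r^2 + p^2 = be^2" using main i1 i3 by simp
  have r3: "p^2 + q^2 + r^2 = d^2" using main i1 by simp
  have "perfect_euler_cuboid (nat p) (nat q) (nat r) (nat al) (nat be) (nat g) (nat d)"
    unfolding perfect_euler_cuboid_def using pos main r1 r2 r3
    by (simp add: nat_pyth2 nat_pyth3 less_imp_le)
  thus ?thesis by blast
qed

lemma dab_fwd:
  fixes p q r g d al be :: real
  assumes pos: "p > 0" "q > 0" "r > 0" "g > 0" "d > 0" "al > 0" "be > 0"
    and e1: "p^2 + q^2 = g^2" and e2: "q^2 + r^2 = al^2" and e3: "r^2 + p^2 = be^2"
    and e4: "p^2 + q^2 + r^2 = d^2"
  shows "((d - p) / al, (d - q) / be) \<in> D_ab"
proof -
  define u0 where "u0 = r / (d + g)"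
  define z0 where "z0 = q / (g + p)"
  have rd: "r < d" using e4 e1 pos by (smt (verit) power_less_imp_less_base zero_less_power)
  have qg: "q < g" using e1 pos by (smt (verit) power_less_imp_less_base zero_less_power)
  have pd: "p < d" using e4 pos by (smt (verit) power_less_imp_less_base zero_less_power)
  have qd: "q < d" using e4 pos by (smt (verit) power_less_imp_less_base zero_less_power)
  have uz: "0 < u0" "u0 < 1" "0 < z0" "z0 < 1" unfolding u0_def z0_def using pos rd qg by simp_all
  have U2: "u0^2 = (d - g) / (d + g)"
  proof -
    have "u0^2 = r^2 / (d+g)^2" unfolding u0_def by (simp add: power_divide)
    also have "r^2 = (d - g) * (d + g)" using e1 e4 by (simp add: algebra_simps power2_eq_square)
    finally show ?thesis using pos by (simp add: power2_eq_square)
  qed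
  have Z2: "z0^2 = (g - p) / (g + p)"
  proof -
    have "z0^2 = q^2 / (g+p)^2" unfolding z0_def by (simp add: power_divide)
    also have "q^2 = (g - p) * (g + p)" using e1 by (simp add: algebra_simps power2_eq_square)
    finally show ?thesis using pos by (simp add: power2_eq_square)
  qed
  have A2: "(u0^2 + z0^2) / (u0^2 * z0^2 + 1) = ((d - p) / al)^2"
  proof -
    have h: "d + g > 0" "g + p > 0" "d + p > 0" using pos by simp_all
    have n1: "u0^2 + z0^2 = 2*g*(d-p) / ((d+g)*(g+p))"
      unfolding U2 Z2 using h by (simp add: field_simps)
    have n2: "u0^2 * z0^2 + 1 = 2*g*(d+p) / ((d+g)*(g+p))"
    proof -
      have y: "(d+g)*(g+p) \<noteq> 0" using h by simp
      have gen: "\<And>x y::real. y \<noteq> 0 \<Longrightarrow> x / y + 1 = (x + y) / y" by (simp add: field_simps)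
      have "u0^2 * z0^2 + 1 = ((d-g)*(g-p)) / ((d+g)*(g+p)) + 1"
        unfolding U2 Z2 by simp
      also have "\<dots> = ((d-g)*(g-p) + (d+g)*(g+p)) / ((d+g)*(g+p))" using gen[OF y] .
      also have "(d-g)*(g-p) + (d+g)*(g+p) = 2*g*(d+p)" by (simp add: algebra_simps)
      finally show ?thesis .
    qed
    have "(u0^2 + z0^2) / (u0^2 * z0^2 + 1) = (d - p) / (d + p)"
      unfolding n1 n2 using h pos by simp
    also have "\<dots> = ((d - p) / al)^2"
    proof -
      have "al^2 = (d - p) * (d + p)" using e2 e4 by (simp add: algebra_simps power2_eq_square)
      hence "((d - p) / al)^2 = (d - p)^2 / ((d - p) * (d + p))" by (simp add: power_divide)
      also have "\<dots> = (d - p) / (d + p)" using pd by (simp add: power2_eq_square)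
      finally show ?thesis by simp
    qed
    finally show ?thesis .
  qed
  have B2: "((1 + u0^2) * (1 + z0^2) - 2 * z0 * (1 - u0^2)) /
                   ((1 + u0^2) * (1 + z0^2) + 2 * z0 * (1 - u0^2)) = ((d - q) / be)^2"
  proof -
    have h: "d + g > 0" "g + p > 0" "d + q > 0" using pos by simp_all
    have a1: "1 + u0^2 = 2*d/(d+g)" "1 - u0^2 = 2*g/(d+g)" unfolding U2 using h by (simp_all add: field_simps)
    have a2: "1 + z0^2 = 2*g/(g+p)" unfolding Z2 using h by (simp_all add: field_simps)
    have m1: "(1 + u0^2) * (1 + z0^2) = 4*d*g/((d+g)*(g+p))" unfolding a1 a2 by simp
    have m2: "2 * z0 * (1 - u0^2) = 4*g*q/((d+g)*(g+p))" unfolding a1 z0_def by (simp add: ac_simps)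
    have n1: "(1 + u0^2) * (1 + z0^2) - 2 * z0 * (1 - u0^2) = 4*g*(d-q)/((d+g)*(g+p))"
      unfolding m1 m2 by (simp add: diff_divide_distrib[symmetric] algebra_simps)
    have n2: "(1 + u0^2) * (1 + z0^2) + 2 * z0 * (1 - u0^2) = 4*g*(d+q)/((d+g)*(g+p))"
      unfolding m1 m2 by (simp add: add_divide_distrib[symmetric] algebra_simps)
    have "((1 + u0^2) * (1 + z0^2) - 2 * z0 * (1 - u0^2)) /
                   ((1 + u0^2) * (1 + z0^2) + 2 * z0 * (1 - u0^2)) = (d - q) / (d + q)"
      unfolding n1 n2 using h pos by simp
    also have "\<dots> = ((d - q) / be)^2"
    proof -
      have "be^2 = (d - q) * (d + q)" using e3 e4 by (simp add: algebra_simps power2_eq_square)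
      hence "((d - q) / be)^2 = (d - q)^2 / ((d - q) * (d + q))" by (simp add: power_divide)
      also have "\<dots> = (d - q) / (d + q)" using qd by (simp add: power2_eq_square)
      finally show ?thesis by simp
    qed
    finally show ?thesis .
  qed
  have fa: "f_a u0 z0 = (d - p) / al" unfolding f_a_def A2 using pos pd by simp
  have fb: "f_b u0 z0 = (d - q) / be" unfolding f_b_def B2 using pos qd by simp
  have "(u0, z0) \<in> D_uz" unfolding D_uz_def using uz by simp
  moreover have "f_uz (u0, z0) = ((d - p) / al, (d - q) / be)" unfolding f_uz_def using fa fb by simp
  ultimately show ?thesis unfolding D_ab_def by (metis image_eqI)
qed

lemma sqM: "((x::int)^2 + y^2 - z^2) * M^2 = (x*M)^2 + (y*M)^2 - (z*M)^2"
  by algebra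

lemma fwd_poly:
  fixes p q r g d al be :: int
  assumes pos: "p > 0" "q > 0" "r > 0" "g > 0" "d > 0" "al > 0" "be > 0"
    and e1: "p^2 + q^2 = g^2" and e2: "q^2 + r^2 = al^2" and e3: "r^2 + p^2 = be^2"
    and e4: "p^2 + q^2 + r^2 = d^2"
  defines "A \<equiv> (d - p) * be * r" and "B \<equiv> (d - q) * al * r" and "C \<equiv> al * be * r"
    and "U \<equiv> (d - g) * al * be"
  shows "((C^2-A^2)*(C^2+B^2)*(C^2+U^2))^2 + ((C^2-B^2)*(C^2+A^2)*(C^2+U^2))^2
       - ((C^2-U^2)*(C^2+A^2)*(C^2+B^2))^2 = 0"
proof -
  have ra: "A^2 * (d + p) = C^2 * (d - p)"
  proof -
    have h: "d^2 - p^2 - al^2 = 0" using e2 e4 by simp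
    have "A^2 * (d + p) - C^2 * (d - p) = (d - p) * be^2 * r^2 * (d^2 - p^2 - al^2)"
      unfolding A_def C_def by algebra
    thus ?thesis using h by simp
  qed
  have rb: "B^2 * (d + q) = C^2 * (d - q)"
  proof -
    have h: "d^2 - q^2 - be^2 = 0" using e3 e4 by simp
    have "B^2 * (d + q) - C^2 * (d - q) = (d - q) * al^2 * r^2 * (d^2 - q^2 - be^2)"
      unfolding B_def C_def by algebra
    thus ?thesis using h by simp
  qed
  have ru: "U^2 * (d + g) = C^2 * (d - g)"
  proof -
    have h: "d^2 - g^2 - r^2 = 0" using e1 e4 by simp
    have "U^2 * (d + g) - C^2 * (d - g) = (d - g) * al^2 * be^2 * (d^2 - g^2 - r^2)"
      unfolding U_def C_def by algebra
    thus ?thesis using h by simp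
  qed
  define M where "M = (d + p) * (d + q) * (d + g)"
  have ma1: "(C^2 - A^2) * (d + p) = 2 * p * C^2" using ra by (simp add: algebra_simps)
  have ma2: "(C^2 + A^2) * (d + p) = 2 * d * C^2" using ra by (simp add: algebra_simps)
  have mb1: "(C^2 - B^2) * (d + q) = 2 * q * C^2" using rb by (simp add: algebra_simps)
  have mb2: "(C^2 + B^2) * (d + q) = 2 * d * C^2" using rb by (simp add: algebra_simps)
  have mu1: "(C^2 - U^2) * (d + g) = 2 * g * C^2" using ru by (simp add: algebra_simps)
  have mu2: "(C^2 + U^2) * (d + g) = 2 * d * C^2" using ru by (simp add: algebra_simps)
  have P1: "(C^2-A^2)*(C^2+B^2)*(C^2+U^2) * M = (2 * p * C^2) * (2 * d * C^2) * (2 * d * C^2)"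
  proof -
    have "(C^2-A^2)*(C^2+B^2)*(C^2+U^2) * M
        = ((C^2 - A^2) * (d + p)) * ((C^2 + B^2) * (d + q)) * ((C^2 + U^2) * (d + g))"
      unfolding M_def by (simp add: ac_simps)
    thus ?thesis using ma1 mb2 mu2 by simp
  qed
  have P2: "(C^2-B^2)*(C^2+A^2)*(C^2+U^2) * M = (2 * q * C^2) * (2 * d * C^2) * (2 * d * C^2)"
  proof -
    have "(C^2-B^2)*(C^2+A^2)*(C^2+U^2) * M
        = ((C^2 - B^2) * (d + q)) * ((C^2 + A^2) * (d + p)) * ((C^2 + U^2) * (d + g))"
      unfolding M_def by (simp add: ac_simps)
    thus ?thesis using mb1 ma2 mu2 by simp
  qed
  have P3: "(C^2-U^2)*(C^2+A^2)*(C^2+B^2) * M = (2 * g * C^2) * (2 * d * C^2) * (2 * d * C^2)"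
  proof -
    have "(C^2-U^2)*(C^2+A^2)*(C^2+B^2) * M
        = ((C^2 - U^2) * (d + g)) * ((C^2 + A^2) * (d + p)) * ((C^2 + B^2) * (d + q))"
      unfolding M_def by (simp add: ac_simps)
    thus ?thesis using mu1 ma2 mb2 by simp
  qed
  define X where "X = ((C^2-A^2)*(C^2+B^2)*(C^2+U^2))^2 + ((C^2-B^2)*(C^2+A^2)*(C^2+U^2))^2
       - ((C^2-U^2)*(C^2+A^2)*(C^2+B^2))^2"
  have "X * M^2 = ((C^2-A^2)*(C^2+B^2)*(C^2+U^2) * M)^2 + ((C^2-B^2)*(C^2+A^2)*(C^2+U^2) * M)^2
       - ((C^2-U^2)*(C^2+A^2)*(C^2+B^2) * M)^2"
    unfolding X_def by (rule sqM)
  also have "\<dots> = (8 * d^2 * C^6)^2 * (p^2 + q^2 - g^2)"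
    unfolding P1 P2 P3 by algebra
  also have "\<dots> = 0" using e1 by simp
  finally have "X * M^2 = 0" .
  moreover have "M \<noteq> 0" unfolding M_def using pos by simp
  ultimately have "X = 0" by simp
  thus ?thesis unfolding X_def .
qed

lemma fwd:
  assumes "perfect_euler_cuboid a0 b0 c0 al0 be0 g0 d0"
  shows "\<exists>a b c u :: int. c > 0 \<and> 0 < real_of_int u / real_of_int c \<and> real_of_int u / real_of_int c < 1 \<and>
       (real_of_int a / real_of_int c, real_of_int b / real_of_int c) \<in> D_ab \<and>
       ((c^2-a^2)*(c^2+b^2)*(c^2+u^2))^2 + ((c^2-b^2)*(c^2+a^2)*(c^2+u^2))^2
       - ((c^2-u^2)*(c^2+a^2)*(c^2+b^2))^2 = 0"
proof -
  define p where "p = int a0"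
  define q where "q = int b0"
  define r where "r = int c0"
  define al where "al = int al0"
  define be where "be = int be0"
  define g where "g = int g0"
  define d where "d = int d0"
  have pos: "p > 0" "q > 0" "r > 0" "g > 0" "d > 0" "al > 0" "be > 0"
    using assms unfolding perfect_euler_cuboid_def p_def q_def r_def g_def d_def al_def be_def by simp_all
  have e1: "p^2 + q^2 = g^2" and e2: "q^2 + r^2 = al^2" and e3: "r^2 + p^2 = be^2"
    and e4: "p^2 + q^2 + r^2 = d^2"
    using assms unfolding perfect_euler_cuboid_def p_def q_def r_def g_def d_def al_def be_def
    by (metis of_nat_add of_nat_power)+
  define A where "A = (d - p) * be * r"
  define B where "B = (d - q) * al * r"
  define C where "C = al * be * r"
  define U where "U = (d - g) * al * be"
  have poly: "((C^2-A^2)*(C^2+B^2)*(C^2+U^2))^2 + ((C^2-B^2)*(C^2+A^2)*(C^2+U^2))^2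
       - ((C^2-U^2)*(C^2+A^2)*(C^2+B^2))^2 = 0"
    unfolding A_def B_def C_def U_def by (rule fwd_poly[OF pos e1 e2 e3 e4])
  have Cpos: "C > 0" unfolding C_def using pos by simp
  have R: "real_of_int p > 0" "real_of_int q > 0" "real_of_int r > 0" "real_of_int g > 0"
     "real_of_int d > 0" "real_of_int al > 0" "real_of_int be > 0" using pos by simp_all
  have RE: "(real_of_int p)^2 + (real_of_int q)^2 = (real_of_int g)^2"
     "(real_of_int q)^2 + (real_of_int r)^2 = (real_of_int al)^2"
     "(real_of_int r)^2 + (real_of_int p)^2 = (real_of_int be)^2"
     "(real_of_int p)^2 + (real_of_int q)^2 + (real_of_int r)^2 = (real_of_int d)^2"
    using e1 e2 e3 e4 by (metis of_int_add of_int_power)+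
  have dab: "((real_of_int d - real_of_int p) / real_of_int al, (real_of_int d - real_of_int q) / real_of_int be) \<in> D_ab"
    by (rule dab_fwd[OF R RE])
  have qa: "real_of_int A / real_of_int C = (real_of_int d - real_of_int p) / real_of_int al"
    unfolding A_def C_def using R by simp
  have qb: "real_of_int B / real_of_int C = (real_of_int d - real_of_int q) / real_of_int be"
    unfolding B_def C_def using R by simp
  have qu: "real_of_int U / real_of_int C = (real_of_int d - real_of_int g) / real_of_int r"
    unfolding U_def C_def using R by simp
  have gd: "g < d" using e1 e4 pos by (smt (verit) power_less_imp_less_base zero_less_power)
  have dgr: "d < g + r"
  proof -
    have "d^2 < (g + r)^2" using e1 e4 pos by (simp add: power2_sum)
    thus ?thesis using pos by (smt (verit) power_less_imp_less_base)
  qed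
  have u1: "0 < real_of_int U / real_of_int C" unfolding qu using gd R by simp
  have u2: "real_of_int U / real_of_int C < 1" unfolding qu using dgr R by simp
  show ?thesis using Cpos u1 u2 dab qa qb poly by metis
qed

theorem theorem5p3:
  shows "(\<exists>a b c \<alpha> \<beta> \<gamma> d. perfect_euler_cuboid a b c \<alpha> \<beta> \<gamma> d) \<longleftrightarrow>
    (\<exists>a b c u :: int. c > 0 \<and> 0 < real_of_int u / real_of_int c \<and> real_of_int u / real_of_int c < 1 \<and>
       (real_of_int a / real_of_int c, real_of_int b / real_of_int c) \<in> D_ab \<and>
       u^4*a^4*b^4 + 6*a^4*u^2*b^4*c^2 - 2*u^4*a^4*b^2*c^2 - 2*u^4*a^2*b^4*c^2
       + 4*u^2*b^4*a^2*c^4 + 4*a^4*u^2*b^2*c^4 - 12*u^4*a^2*b^2*c^4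
       + u^4*a^4*c^4 + u^4*b^4*c^4 + a^4*b^4*c^4 + 6*a^4*u^2*c^6 + 6*u^2*b^4*c^6
       - 8*a^2*b^2*u^2*c^6 - 2*u^4*a^2*c^6 - 2*u^4*b^2*c^6
       - 2*a^4*b^2*c^6 - 2*b^4*a^2*c^6 + u^4*c^8 + b^4*c^8 + a^4*c^8
       + 4*a^2*u^2*c^8 + 4*b^2*u^2*c^8 - 12*b^2*a^2*c^8
       + 6*u^2*c^10 - 2*a^2*c^10 - 2*b^2*c^10 + c^12 = 0)"
proof
  assume "\<exists>a b c \<alpha> \<beta> \<gamma> d. perfect_euler_cuboid a b c \<alpha> \<beta> \<gamma> d"
  then obtain a0 b0 c0 al0 be0 g0 d0 where "perfect_euler_cuboid a0 b0 c0 al0 be0 g0 d0" by blast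
  from fwd[OF this] show "\<exists>a b c u :: int. c > 0 \<and> 0 < real_of_int u / real_of_int c \<and> real_of_int u / real_of_int c < 1 \<and>
       (real_of_int a / real_of_int c, real_of_int b / real_of_int c) \<in> D_ab \<and>
       u^4*a^4*b^4 + 6*a^4*u^2*b^4*c^2 - 2*u^4*a^4*b^2*c^2 - 2*u^4*a^2*b^4*c^2
       + 4*u^2*b^4*a^2*c^4 + 4*a^4*u^2*b^2*c^4 - 12*u^4*a^2*b^2*c^4
       + u^4*a^4*c^4 + u^4*b^4*c^4 + a^4*b^4*c^4 + 6*a^4*u^2*c^6 + 6*u^2*b^4*c^6
       - 8*a^2*b^2*u^2*c^6 - 2*u^4*a^2*c^6 - 2*u^4*b^2*c^6
       - 2*a^4*b^2*c^6 - 2*b^4*a^2*c^6 + u^4*c^8 + b^4*c^8 + a^4*c^8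
       + 4*a^2*u^2*c^8 + 4*b^2*u^2*c^8 - 12*b^2*a^2*c^8
       + 6*u^2*c^10 - 2*a^2*c^10 - 2*b^2*c^10 + c^12 = 0"
    unfolding L0 .
next
  assume "\<exists>a b c u :: int. c > 0 \<and> 0 < real_of_int u / real_of_int c \<and> real_of_int u / real_of_int c < 1 \<and>
       (real_of_int a / real_of_int c, real_of_int b / real_of_int c) \<in> D_ab \<and>
       u^4*a^4*b^4 + 6*a^4*u^2*b^4*c^2 - 2*u^4*a^4*b^2*c^2 - 2*u^4*a^2*b^4*c^2
       + 4*u^2*b^4*a^2*c^4 + 4*a^4*u^2*b^2*c^4 - 12*u^4*a^2*b^2*c^4
       + u^4*a^4*c^4 + u^4*b^4*c^4 + a^4*b^4*c^4 + 6*a^4*u^2*c^6 + 6*u^2*b^4*c^6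
       - 8*a^2*b^2*u^2*c^6 - 2*u^4*a^2*c^6 - 2*u^4*b^2*c^6
       - 2*a^4*b^2*c^6 - 2*b^4*a^2*c^6 + u^4*c^8 + b^4*c^8 + a^4*c^8
       + 4*a^2*u^2*c^8 + 4*b^2*u^2*c^8 - 12*b^2*a^2*c^8
       + 6*u^2*c^10 - 2*a^2*c^10 - 2*b^2*c^10 + c^12 = 0"
  then obtain a b c u :: int where c: "c > 0" and u1: "0 < real_of_int u / real_of_int c"
    and u2: "real_of_int u / real_of_int c < 1"
    and D: "(real_of_int a / real_of_int c, real_of_int b / real_of_int c) \<in> D_ab"
    and eq: "((c^2-a^2)*(c^2+b^2)*(c^2+u^2))^2 + ((c^2-b^2)*(c^2+a^2)*(c^2+u^2))^2
       - ((c^2-u^2)*(c^2+a^2)*(c^2+b^2))^2 = 0"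
    unfolding L0 by blast
  have cr: "real_of_int c > 0" using c by simp
  have dp: "0 < real_of_int a / real_of_int c" "(real_of_int a / real_of_int c)^2 < 1"
     "0 < real_of_int b / real_of_int c" "(real_of_int b / real_of_int c)^2 < 1"
    using Dab_props[OF D] by auto
  have a1: "0 < a" using dp(1) cr by (simp add: zero_less_divide_iff)
  have b1: "0 < b" using dp(3) cr by (simp add: zero_less_divide_iff)
  have "(real_of_int a)^2 < (real_of_int c)^2" using dp(2) cr by (simp add: power_divide)
  hence a2: "a^2 < c^2" by (metis of_int_less_iff of_int_power)
  have "(real_of_int b)^2 < (real_of_int c)^2" using dp(4) cr by (simp add: power_divide)
  hence b2: "b^2 < c^2" by (metis of_int_less_iff of_int_power)
  have uu1: "0 < u" using u1 cr by (simp add: zero_less_divide_iff)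
  have uu2: "u < c" using u2 cr by simp
  show "\<exists>a b c \<alpha> \<beta> \<gamma> d. perfect_euler_cuboid a b c \<alpha> \<beta> \<gamma> d"
    by (rule bwd[OF c a1 a2 b1 b2 uu1 uu2 eq])
qed

end
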